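(* Let $M\ge2$ be an integer and $k\ge2$ real. Suppose $0\le x_1\le\dots\le x_M$ and $\lambda_1,\dots,\lambda_M\ge0$ with $\sum_{i=1}^M\lambda_i=1$. Then $$\sum_{i=1}^M\lambda_ix_i^k-\Big(\sum_{i=1}^M\lambda_ix_i\Big)^k\le\frac18k(k-1)\,x_M^{k-2}(x_M-x_1)^2.$$ *)

theory Defs
  imports "HOL-Analysis.Analysis"
begin

end

theory Submission imports Defs begin

lemma chordG:
  fixes phi phi' :: "real \<Rightarrow> real"
  assumes ab: "a < b" and cont: "continuous_on {a..b} phi"
    and der: "\<And>x. a < x \<Longrightarrow> x < b \<Longrightarrow> (phi has_real_derivative phi' x) (at x)"
    and mon: "\<And>x y. a < x \<Longrightarrow> x \<le> y \<Longrightarrow> y < b \<Longrightarrow> phi' x \<le> phi' y"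
    and t: "a \<le> t" "t \<le> b"
  shows "(b - a) * phi t \<le> (b - t) * phi a + (t - a) * phi b"
proof (cases "t = a \<or> t = b")
  case True then show ?thesis by (auto simp: algebra_simps)
next
  case False
  then have t': "a < t" "t < b" using t by auto
  have d: "phi differentiable (at x)" if "a < x" "x < b" for x
    using der[OF that] real_differentiable_def by blast
  have c1: "continuous_on {a..t} phi" by (rule continuous_on_subset[OF cont]) (use t' in auto)
  have c2: "continuous_on {t..b} phi" by (rule continuous_on_subset[OF cont]) (use t' in auto)
  obtain l1 z1 where z1: "a < z1" "z1 < t" "(phi has_real_derivative l1) (at z1)"
      "phi t - phi a = (t - a) * l1"
  proof -
    have "\<exists>l z. a < z \<and> z < t \<and> DERIV phi z :> l \<and> phi t - phi a = (t - a) * l"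
      by (rule MVT[OF t'(1) c1]) (rule d, use t' in auto)
    then show ?thesis using that by blast
  qed
  obtain l2 z2 where z2: "t < z2" "z2 < b" "(phi has_real_derivative l2) (at z2)"
      "phi b - phi t = (b - t) * l2"
  proof -
    have "\<exists>l z. t < z \<and> z < b \<and> DERIV phi z :> l \<and> phi b - phi t = (b - t) * l"
      by (rule MVT[OF t'(2) c2]) (rule d, use t' in auto)
    then show ?thesis using that by blast
  qed
  have "l1 = phi' z1" using DERIV_unique z1(3) der[of z1] z1(1,2) t' by simp
  moreover have "l2 = phi' z2" using DERIV_unique z2(3) der[of z2] z2(1,2) t' by simp
  ultimately have "l1 \<le> l2" using mon z1 z2 by simp
  then have "(b - t) * (t - a) * l1 \<le> (b - t) * (t - a) * l2"
    using t' by (intro mult_left_mono) auto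
  then have "(b - t) * (phi t - phi a) \<le> (t - a) * (phi b - phi t)"
    unfolding z1(4) z2(4) by (simp only: mult_ac)
  then show ?thesis by (simp add: algebra_simps)
qed

lemma phi_mono:
  fixes k b C :: real
  assumes k: "k \<ge> 2" and C: "C = k * (k - 1) * b powr (k - 2)"
    and xy: "0 < x" "x \<le> y" "y < b"
  shows "C * x - k * x powr (k - 1) \<le> C * y - k * y powr (k - 1)"
proof (rule DERIV_nonneg_imp_increasing_open[OF xy(2)])
  fix t assume t: "x < t" "t < y"
  have tp: "t > 0" using t xy by simp
  have "((\<lambda>t. C * t - k * t powr (k - 1)) has_real_derivative C - k * ((k - 1) * t powr (k - 1 - 1))) (at t)"
    using tp by (auto intro!: derivative_eq_intros)
  moreover have "k * ((k - 1) * t powr (k - 1 - 1)) \<le> C"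
  proof -
    have "t powr (k - 2) \<le> b powr (k - 2)" using tp t xy k by (intro powr_mono2) auto
    then have "k * (k - 1) * t powr (k - 2) \<le> k * (k - 1) * b powr (k - 2)"
      using k by (intro mult_left_mono) auto
    then show ?thesis using C by (simp add: algebra_simps)
  qed
  ultimately show "\<exists>y. ((\<lambda>t. C * t - k * t powr (k - 1)) has_real_derivative y) (at t) \<and> 0 \<le> y"
    by auto
next
  show "continuous_on {x..y} (\<lambda>t. C * t - k * t powr (k - 1))"
    using xy by (intro continuous_intros) auto
qed

theorem lemma4p3:
  fixes M :: nat and k :: real and x lam :: "nat \<Rightarrow> real"
  assumes "M \<ge> 2" and "k \<ge> 2"
    and "x 1 \<ge> 0"
    and "\<And>i j. 1 \<le> i \<Longrightarrow> i \<le> j \<Longrightarrow> j \<le> M \<Longrightarrow> x i \<le> x j"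
    and "\<And>i. 1 \<le> i \<Longrightarrow> i \<le> M \<Longrightarrow> lam i \<ge> 0"
    and "(\<Sum>i=1..M. lam i) = 1"
  shows "(\<Sum>i=1..M. lam i * x i powr k) - (\<Sum>i=1..M. lam i * x i) powr k
         \<le> 1/8 * k * (k - 1) * x M powr (k - 2) * (x M - x 1)^2"
proof -
  define a where "a = x 1"
  define b where "b = x M"
  define C where "C = k * (k - 1) * b powr (k - 2)"
  define mu where "mu = (\<Sum>i=1..M. lam i * x i)"
  have k: "k \<ge> 2" using assms by simp
  have a0: "a \<ge> 0" using assms a_def by simp
  have xin: "a \<le> x i \<and> x i \<le> b" if "i \<in> {1..M}" for i
    using that assms(4)[of 1 i] assms(4)[of i M] a_def b_def by auto
  have lam0: "lam i \<ge> 0" if "i \<in> {1..M}" for i using that assms(5) by auto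
  have ab: "a \<le> b" using xin[of 1] assms(1) by auto
  have C0: "C \<ge> 0" using k C_def by auto
  have RHS: "1/8 * k * (k - 1) * x M powr (k - 2) * (x M - x 1)^2 = C / 8 * (b - a)^2"
    by (simp add: C_def a_def b_def)
  have mu_lo: "a \<le> mu"
  proof -
    have "(\<Sum>i=1..M. lam i * a) \<le> mu" unfolding mu_def
      using xin lam0 by (intro sum_mono mult_left_mono) auto
    moreover have "(\<Sum>i=1..M. lam i * a) = a" using assms(6) by (simp add: sum_distrib_right[symmetric])
    ultimately show ?thesis by simp
  qed
  have mu_hi: "mu \<le> b"
  proof -
    have "mu \<le> (\<Sum>i=1..M. lam i * b)" unfolding mu_def
      using xin lam0 by (intro sum_mono mult_left_mono) auto
    moreover have "(\<Sum>i=1..M. lam i * b) = b" using assms(6) by (simp add: sum_distrib_right[symmetric])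
    ultimately show ?thesis by simp
  qed
  show ?thesis
  proof (cases "a = b")
    case True
    then have xa: "x i = a" if "i \<in> {1..M}" for i using xin[OF that] by auto
    have "(\<Sum>i=1..M. lam i * x i powr k) = (\<Sum>i=1..M. lam i * a powr k)"
      using xa by (intro sum.cong) auto
    also have "\<dots> = a powr k" using assms(6) by (simp add: sum_distrib_right[symmetric])
    finally have s1: "(\<Sum>i=1..M. lam i * x i powr k) = a powr k" .
    have "mu = a" using mu_lo mu_hi True by simp
    then show ?thesis unfolding RHS using s1 True mu_def by simp
  next
    case False
    then have ab': "a < b" using ab by simp
    define f where "f = (\<lambda>t::real. t powr k)"
    have chord1: "(b - a) * f t \<le> (b - t) * f a + (t - a) * f b" if "a \<le> t" "t \<le> b" for t
    proof (rule chordG[OF ab', where phi' = "\<lambda>t. k * t powr (k - 1)"])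
      show "continuous_on {a..b} f" unfolding f_def
        using a0 k by (intro continuous_on_powr' continuous_intros) auto
      show "(f has_real_derivative k * t powr (k - 1)) (at t)" if "a < t" "t < b" for t
        unfolding f_def using that a0 by (auto intro!: derivative_eq_intros)
      show "k * t powr (k - 1) \<le> k * s powr (k - 1)" if "a < t" "t \<le> s" "s < b" for t s
        using that a0 k by (intro mult_left_mono powr_mono2) auto
    qed (use that in auto)
    define g where "g = (\<lambda>t::real. C / 2 * t^2 - t powr k)"
    have chord2: "(b - a) * g mu \<le> (b - mu) * g a + (mu - a) * g b"
    proof (rule chordG[OF ab', where phi' = "\<lambda>t. C * t - k * t powr (k - 1)"])
      show "continuous_on {a..b} g" unfolding g_def
        using a0 k by (intro continuous_on_powr' continuous_intros) auto
      show "(g has_real_derivative C * t - k * t powr (k - 1)) (at t)" if "a < t" "t < b" for t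
        unfolding g_def using that a0 by (auto intro!: derivative_eq_intros)
      show "C * t - k * t powr (k - 1) \<le> C * s - k * s powr (k - 1)" if "a < t" "t \<le> s" "s < b" for t s
        using that a0 k by (intro phi_mono[OF k C_def]) auto
    qed (use mu_lo mu_hi in auto)
    have "(b - a) * (\<Sum>i=1..M. lam i * x i powr k) = (\<Sum>i=1..M. lam i * ((b - a) * f (x i)))"
      by (simp add: sum_distrib_left f_def mult_ac)
    also have "\<dots> \<le> (\<Sum>i=1..M. lam i * ((b - x i) * f a + (x i - a) * f b))"
      using chord1 xin lam0 by (intro sum_mono mult_left_mono) auto
    also have "\<dots> = (\<Sum>i=1..M. (b * f a - a * f b) * lam i + (f b - f a) * (lam i * x i))"
      by (intro sum.cong) (auto simp: algebra_simps)
    also have "\<dots> = (b * f a - a * f b) * (\<Sum>i=1..M. lam i) + (f b - f a) * mu"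
      unfolding mu_def by (simp add: sum.distrib sum_distrib_left)
    also have "\<dots> = (b - mu) * f a + (mu - a) * f b"
      using assms(6) by (simp add: algebra_simps)
    finally have s1: "(b - a) * (\<Sum>i=1..M. lam i * x i powr k) \<le> (b - mu) * f a + (mu - a) * f b" .
    have idq: "(b - mu) * a^2 + (mu - a) * b^2 - (b - a) * mu^2 = (b - a) * (mu - a) * (b - mu)"
      by (simp add: algebra_simps power2_eq_square)
    have "(b - mu) * f a + (mu - a) * f b - (b - a) * f mu \<le> C / 2 * ((b - mu) * a^2 + (mu - a) * b^2 - (b - a) * mu^2)"
    proof -
      have e1: "(b - a) * g mu = C/2*((b-a)*mu^2) - (b-a)*f mu" by (simp add: g_def f_def field_simps)
      have e2: "(b - mu) * g a = C/2*((b-mu)*a^2) - (b-mu)*f a" by (simp add: g_def f_def field_simps)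
      have e3: "(mu - a) * g b = C/2*((mu-a)*b^2) - (mu-a)*f b" by (simp add: g_def f_def field_simps)
      have e4: "C/2*((b - mu)*a^2 + (mu-a)*b^2 - (b-a)*mu^2) = C/2*((b-mu)*a^2) + C/2*((mu-a)*b^2) - C/2*((b-a)*mu^2)"
        by (simp add: algebra_simps)
      show ?thesis using chord2 e1 e2 e3 e4 by linarith
    qed
    also have "\<dots> = (b - a) * (C / 2 * (mu - a) * (b - mu))" using idq by simp
    finally have "(b - a) * ((\<Sum>i=1..M. lam i * x i powr k) - f mu) \<le> (b - a) * (C / 2 * (mu - a) * (b - mu))"
      using s1 by (simp add: algebra_simps)
    then have s2: "(\<Sum>i=1..M. lam i * x i powr k) - f mu \<le> C / 2 * (mu - a) * (b - mu)"
      using ab' by simp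
    have "4 * ((mu - a) * (b - mu)) \<le> (b - a)^2"
      using sum_squares_ge_zero[of "mu - a - (b - mu)" 0]
      by (simp add: algebra_simps power2_eq_square)
    then have "C / 2 * (mu - a) * (b - mu) \<le> C / 8 * (b - a)^2"
      using C0 mult_left_mono[of "4 * ((mu - a) * (b - mu))" "(b - a)^2" "C/8"] by (simp add: algebra_simps)
    then show ?thesis unfolding RHS using s2 unfolding f_def mu_def by linarith
  qed
qed

end
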